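(* Let $\theta$ be a real-valued treatment-effect parameter, $\delta\in\mathbb{R}$ a clinical margin and $c\in(0,1)$. Let $\pi_{\mathrm{a}}$ (analysis prior) and $\pi_{\mathrm{d}}$ (design prior) be probability distributions on $\theta$ with $\Pr_{\mathrm{d}}(\theta\le\delta)>0$, and let data $\mathcal{D}$ have sampling distribution $f(\mathcal{D}\mid\theta)$. Define $\mathcal{S}(\mathcal{D};c)=\mathbb{I}\{\Pr_{\mathrm{a}}(\theta>\delta\mid\mathcal{D})>c\}$ with $\Pr_{\mathrm{a}}(\cdot\mid\mathcal{D})$ the posterior under $\pi_{\mathrm{a}}$, and the power function $\beta(\theta)=\Pr\{\mathcal{S}(\mathcal{D};c)=1\mid\theta\}$ (probability over $\mathcal{D}\sim f(\cdot\mid\theta)$). Assume $\beta(\theta)$ is strictly increasing in $\theta$. Let the frequentist Type I error rate be $\alpha(c)=\beta(\delta)$ and the Bayesian Type I error rate be $\alpha_B(c)=\int_{\theta\le\delta}\beta(\theta)\,\pi_{\mathrm{d}}(\theta\mid\theta\le\delta)\,d\theta$. Then $\alpha_B(c)\le\alpha(c)$, with equality if and only if $\pi_{\mathrm{d}}$ is a point mass at $\theta=\delta$.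
   Context: $\pi_{\mathrm{d}}(\theta\mid\theta\le\delta)$ denotes the design prior restricted to and renormalized on $\{\theta\le\delta\}$ (the integral is understood with respect to this conditional distribution in general). *)

theory Defs
  imports "HOL-Probability.Probability"
begin

text \<open>The data live in a measurable space given by a measure M (dominating measure);
  the sampling distribution f(D | theta) is given as a density f theta w.r.t. M.\<close>

definition post_prob :: "real measure \<Rightarrow> (real \<Rightarrow> 'd \<Rightarrow> real) \<Rightarrow> real \<Rightarrow> 'd \<Rightarrow> real" where
  "post_prob pa f \<delta> x =
     (\<integral>\<theta>. indicator {\<delta><..} \<theta> * f \<theta> x \<partial>pa) / (\<integral>\<theta>. f \<theta> x \<partial>pa)"

definition success :: "real measure \<Rightarrow> (real \<Rightarrow> 'd \<Rightarrow> real) \<Rightarrow> real \<Rightarrow> real \<Rightarrow> 'd \<Rightarrow> bool" where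
  "success pa f \<delta> c x \<longleftrightarrow> post_prob pa f \<delta> x > c"

definition sampling :: "'d measure \<Rightarrow> (real \<Rightarrow> 'd \<Rightarrow> real) \<Rightarrow> real \<Rightarrow> 'd measure" where
  "sampling M f \<theta> = density M (\<lambda>x. ennreal (f \<theta> x))"

definition power :: "real measure \<Rightarrow> 'd measure \<Rightarrow> (real \<Rightarrow> 'd \<Rightarrow> real) \<Rightarrow> real \<Rightarrow> real \<Rightarrow> real \<Rightarrow> real" where
  "power pa M f \<delta> c \<theta> = measure (sampling M f \<theta>) {x \<in> space M. success pa f \<delta> c x}"

definition alpha_freq :: "real measure \<Rightarrow> 'd measure \<Rightarrow> (real \<Rightarrow> 'd \<Rightarrow> real) \<Rightarrow> real \<Rightarrow> real \<Rightarrow> real" where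
  "alpha_freq pa M f \<delta> c = power pa M f \<delta> c \<delta>"

text \<open>Bayesian Type I error rate: integral of beta against the design prior restricted to
  and renormalized on {theta <= delta} (uniform_measure = renormalized restriction).\<close>
definition alpha_bayes :: "real measure \<Rightarrow> real measure \<Rightarrow> 'd measure \<Rightarrow> (real \<Rightarrow> 'd \<Rightarrow> real) \<Rightarrow> real \<Rightarrow> real \<Rightarrow> real" where
  "alpha_bayes pa pd M f \<delta> c = (\<integral>\<theta>. power pa M f \<delta> c \<theta> \<partial>(uniform_measure pd {..\<delta>}))"

end

theory Submission
  imports Defs
begin

theorem proposition2:
  fixes pa pd :: "real measure" and M :: "'d measure"
    and f :: "real \<Rightarrow> 'd \<Rightarrow> real" and \<delta> c :: real
  assumes c: "0 < c" "c < 1"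
    and pa: "prob_space pa" "sets pa = sets borel"
    and pd: "prob_space pd" "sets pd = sets borel"
    and pd_pos: "measure pd {..\<delta>} > 0"
    and f_nonneg: "\<And>\<theta> x. x \<in> space M \<Longrightarrow> 0 \<le> f \<theta> x"
    and f_meas: "(\<lambda>(\<theta>, x). f \<theta> x) \<in> borel_measurable (borel \<Otimes>\<^sub>M M)"
    and f_prob: "\<And>\<theta>. prob_space (sampling M f \<theta>)"
    and mono: "strict_mono (power pa M f \<delta> c)"
  shows "alpha_bayes pa pd M f \<delta> c \<le> alpha_freq pa M f \<delta> c
    \<and> (alpha_bayes pa pd M f \<delta> c = alpha_freq pa M f \<delta> c
         \<longleftrightarrow> uniform_measure pd {..\<delta>} = return borel \<delta>)"
proof -
  define \<beta> where "\<beta> = power pa M f \<delta> c"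
  define U where "U = uniform_measure pd {..\<delta>}"
  have Aset: "{..\<delta>} \<in> sets pd" using pd(2) by simp
  interpret PD: prob_space pd by (rule pd(1))
  have em: "emeasure pd {..\<delta>} \<noteq> 0" "emeasure pd {..\<delta>} \<noteq> \<infinity>"
    using pd_pos PD.emeasure_eq_measure by auto
  have PU: "prob_space U" unfolding U_def by (rule prob_space_uniform_measure[OF em])
  interpret U: prob_space U by (rule PU)
  have sU: "sets U = sets borel" unfolding U_def using pd(2) by simp
  have meas: "\<beta> \<in> borel_measurable U"
    using borel_measurable_mono[of \<beta>] mono unfolding \<beta>_def
    by (simp add: strict_mono_mono measurable_cong_sets[OF sU refl])
  have bnd: "\<And>t. 0 \<le> \<beta> t \<and> \<beta> t \<le> 1"
    unfolding \<beta>_def power_def using prob_space.prob_le_1[OF f_prob] by auto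
  have int: "integrable U \<beta>"
    by (rule U.integrable_const_bound[where B=1]) (use bnd meas in auto)
  have AEle: "AE t in U. t \<le> \<delta>"
    unfolding U_def by (rule AE_uniform_measureI[OF Aset]) auto
  have AEb: "AE t in U. \<beta> t \<le> \<beta> \<delta>"
    using AEle by eventually_elim (use mono strict_mono_less_eq in \<open>auto simp: \<beta>_def\<close>)
  have eqB: "alpha_bayes pa pd M f \<delta> c = integral\<^sup>L U \<beta>"
    and eqF: "alpha_freq pa M f \<delta> c = \<beta> \<delta>"
    unfolding alpha_bayes_def alpha_freq_def U_def \<beta>_def by simp_all
  have le: "integral\<^sup>L U \<beta> \<le> \<beta> \<delta>"
    using integral_mono_AE[OF int _ AEb] U.prob_space by simp
  moreover have "integral\<^sup>L U \<beta> = \<beta> \<delta> \<longleftrightarrow> U = return borel \<delta>"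
  proof
    assume h: "integral\<^sup>L U \<beta> = \<beta> \<delta>"
    have "integral\<^sup>L U (\<lambda>t. \<beta> \<delta> - \<beta> t) = 0"
      using h int U.prob_space by simp
    moreover have "integrable U (\<lambda>t. \<beta> \<delta> - \<beta> t)" using int by simp
    ultimately have "AE t in U. \<beta> \<delta> - \<beta> t = 0"
      using integral_nonneg_eq_0_iff_AE[of U "\<lambda>t. \<beta> \<delta> - \<beta> t"] AEb by auto
    then have AEd: "AE t in U. t = \<delta>"
      by eventually_elim (use mono in \<open>auto simp: \<beta>_def strict_mono_eq\<close>)
    show "U = return borel \<delta>"
    proof (rule measure_eqI)
      show "sets U = sets (return borel \<delta>)" using sU by simp
    next
      fix A assume A: "A \<in> sets U"
      show "emeasure U A = emeasure (return borel \<delta>) A"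
      proof (cases "\<delta> \<in> A")
        case True
        have "AE t in U. t \<in> A" using AEd by eventually_elim (use True in auto)
        then have "emeasure U A = 1"
          using U.emeasure_eq_1_AE A by blast
        then show ?thesis using True A sU by simp
      next
        case False
        have "AE t in U. t \<notin> A" using AEd by eventually_elim (use False in auto)
        then have "emeasure U A = 0"
          using AE_iff_measurable[OF A, of "\<lambda>t. t \<notin> A"] A sets_eq_imp_space_eq[OF sU] by auto
        then show ?thesis using False A sU by simp
      qed
    qed
  next
    assume "U = return borel \<delta>"
    moreover have "\<beta> \<in> borel_measurable borel"
      using meas measurable_cong_sets[OF sU refl] by metis
    ultimately show "integral\<^sup>L U \<beta> = \<beta> \<delta>" by (simp add: integral_return)
  qed
  ultimately show ?thesis using eqB eqF U_def by simp
qed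

end
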